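(* Let $\alpha\in(0,1)$, $n\ge1$, and let $(x_{i1},x_{i2},y_i)\in\mathbb R^3$, $i=1,\dots,n$. Suppose that $$\frac1n\sum_{i=1}^n\mathrm S^{\rm Q}_{\alpha,\theta}(x_{i1},y_i)\le\frac1n\sum_{i=1}^n\mathrm S^{\rm Q}_{\alpha,\theta}(x_{i2},y_i)$$ for every $\theta\in\{x_{11},x_{12},y_1,\dots,x_{n1},x_{n2},y_n\}$. Then the same inequality holds for every $\theta\in\mathbb R$, and consequently $\frac1n\sum_{i=1}^n\mathrm S(x_{i1},y_i)\le\frac1n\sum_{i=1}^n\mathrm S(x_{i2},y_i)$ for every $\mathrm S\in\mathcal S^{\rm Q}_\alpha$ (i.e. the empirical forecast $(x_{i1})_i$ dominates $(x_{i2})_i$ for $\alpha$-quantile prediction).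
   Context: $\mathcal S^{\rm Q}_\alpha$ is the class of all scoring functions $\mathrm S(x,y)=(\mathbb 1(y<x)-\alpha)(g(x)-g(y))$ with $g:\mathbb R\to\mathbb R$ left-continuous and non-decreasing. The elementary quantile scoring function is $\mathrm S^{\rm Q}_{\alpha,\theta}(x,y)=(\mathbb 1(y<x)-\alpha)(\mathbb 1(\theta<x)-\mathbb 1(\theta<y))$, i.e. it equals $1-\alpha$ if $y\le\theta<x$, $\alpha$ if $x\le\theta<y$, and $0$ otherwise. *)

theory Defs
  imports "HOL-Analysis.Analysis"
begin

definition elem_qscore :: "real \<Rightarrow> real \<Rightarrow> real \<Rightarrow> real \<Rightarrow> real" where
  "elem_qscore \<alpha> \<theta> x y =
     ((if y < x then 1 else 0) - \<alpha>) * ((if \<theta> < x then 1 else 0) - (if \<theta> < y then 1 else 0))"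

definition gpl_qscore :: "real \<Rightarrow> (real \<Rightarrow> real) \<Rightarrow> real \<Rightarrow> real \<Rightarrow> real" where
  "gpl_qscore \<alpha> g x y = ((if y < x then 1 else 0) - \<alpha>) * (g x - g y)"

definition quantile_score_class :: "real \<Rightarrow> (real \<Rightarrow> real \<Rightarrow> real) set" where
  "quantile_score_class \<alpha> =
     {S. \<exists>g. mono g \<and> (\<forall>t. continuous (at_left t) g) \<and> S = gpl_qscore \<alpha> g}"

end

theory Submission
  imports Defs
begin

lemma telescope_sorted:
  fixes g :: "real \<Rightarrow> real" and zs :: "real list"
  assumes s: "sorted_wrt (<) zs" and j: "j < length zs"
  shows "g (zs!j) - g (zs!0) =
    (\<Sum>k<length zs - 1. (g (zs!Suc k) - g (zs!k)) * (if zs!k < zs!j then 1 else 0))"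
proof -
  have eq: "\<And>k. k < length zs - 1 \<Longrightarrow> (zs!k < zs!j) = (k < j)"
  proof -
    fix k assume k: "k < length zs - 1"
    show "(zs!k < zs!j) = (k < j)"
    proof
      assume "zs!k < zs!j"
      show "k < j"
      proof (rule ccontr)
        assume "\<not> k < j"
        hence "j \<le> k" by simp
        then consider "j = k" | "j < k" by linarith
        thus False
        proof cases
          case 1 thus False using \<open>zs!k < zs!j\<close> by simp
        next
          case 2 thus False using \<open>zs!k < zs!j\<close> sorted_wrt_nth_less[OF s 2] k by fastforce
        qed
      qed
    next
      assume "k < j" thus "zs!k < zs!j" using sorted_wrt_nth_less[OF s] j by blast
    qed
  qed
  have "(\<Sum>k<length zs - 1. (g (zs!Suc k) - g (zs!k)) * (if zs!k < zs!j then 1 else 0))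
      = (\<Sum>k<length zs - 1. if k < j then g (zs!Suc k) - g (zs!k) else 0)"
    by (rule sum.cong) (auto simp: eq)
  also have "\<dots> = (\<Sum>k\<in>{..<length zs - 1} \<inter> {k. k < j}. g (zs!Suc k) - g (zs!k))"
    by (simp add: sum.inter_restrict)
  also have "{..<length zs - 1} \<inter> {k. k < j} = {..<j}" using j by auto
  also have "(\<Sum>k<j. g (zs!Suc k) - g (zs!k)) = g (zs!j) - g (zs!0)"
    by (rule sum_lessThan_telescope)
  finally show ?thesis by simp
qed

theorem mainTheorem8:
  fixes \<alpha> :: real and n :: nat and x1 x2 y :: "nat \<Rightarrow> real"
  assumes "0 < \<alpha>" and "\<alpha> < 1" and "n \<ge> 1"
    and "\<forall>\<theta> \<in> (\<Union>i\<in>{1..n}. {x1 i, x2 i, y i}).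
           (\<Sum>i=1..n. elem_qscore \<alpha> \<theta> (x1 i) (y i)) / real n
             \<le> (\<Sum>i=1..n. elem_qscore \<alpha> \<theta> (x2 i) (y i)) / real n"
  shows "(\<forall>\<theta>::real. (\<Sum>i=1..n. elem_qscore \<alpha> \<theta> (x1 i) (y i)) / real n
             \<le> (\<Sum>i=1..n. elem_qscore \<alpha> \<theta> (x2 i) (y i)) / real n)
       \<and> (\<forall>S \<in> quantile_score_class \<alpha>.
             (\<Sum>i=1..n. S (x1 i) (y i)) / real n \<le> (\<Sum>i=1..n. S (x2 i) (y i)) / real n)"
proof -
  define P where "P = (\<Union>i\<in>{1..n}. {x1 i, x2 i, y i})"
  have finP: "finite P" unfolding P_def by auto
  have hyp: "\<And>\<theta>. \<theta> \<in> P \<Longrightarrow> (\<Sum>i=1..n. elem_qscore \<alpha> \<theta> (x1 i) (y i))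
             \<le> (\<Sum>i=1..n. elem_qscore \<alpha> \<theta> (x2 i) (y i))"
  proof -
    fix \<theta> assume "\<theta> \<in> P"
    hence "(\<Sum>i=1..n. elem_qscore \<alpha> \<theta> (x1 i) (y i)) / real n
             \<le> (\<Sum>i=1..n. elem_qscore \<alpha> \<theta> (x2 i) (y i)) / real n"
      using assms(4) unfolding P_def by blast
    moreover have "real n > 0" using assms(3) by simp
    ultimately show "(\<Sum>i=1..n. elem_qscore \<alpha> \<theta> (x1 i) (y i))
             \<le> (\<Sum>i=1..n. elem_qscore \<alpha> \<theta> (x2 i) (y i))"
      by (simp add: divide_le_cancel)
  qed
  have mem: "\<And>i. i \<in> {1..n} \<Longrightarrow> x1 i \<in> P \<and> x2 i \<in> P \<and> y i \<in> P"
    unfolding P_def by blast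
  have part1: "\<forall>\<theta>. (\<Sum>i=1..n. elem_qscore \<alpha> \<theta> (x1 i) (y i))
             \<le> (\<Sum>i=1..n. elem_qscore \<alpha> \<theta> (x2 i) (y i))"
  proof
    fix \<theta> :: real
    define Q where "Q = {p\<in>P. p \<le> \<theta>}"
    have finQ: "finite Q" using finP unfolding Q_def by simp
    show "(\<Sum>i=1..n. elem_qscore \<alpha> \<theta> (x1 i) (y i))
             \<le> (\<Sum>i=1..n. elem_qscore \<alpha> \<theta> (x2 i) (y i))"
    proof (cases "Q = {}")
      case True
      have lt: "\<And>z. z \<in> P \<Longrightarrow> \<theta> < z" using True unfolding Q_def by force
      have "\<And>x. x \<in> {1..n} \<Longrightarrow> elem_qscore \<alpha> \<theta> (x1 x) (y x) = 0"
           "\<And>x. x \<in> {1..n} \<Longrightarrow> elem_qscore \<alpha> \<theta> (x2 x) (y x) = 0"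
        using mem lt by (auto simp: elem_qscore_def)
      thus ?thesis by simp
    next
      case False
      define p where "p = Max Q"
      have pQ: "p \<in> Q" using False finQ unfolding p_def by simp
      have iff: "\<And>z. z \<in> P \<Longrightarrow> (\<theta> < z) = (p < z)"
      proof -
        fix z assume z: "z \<in> P"
        show "(\<theta> < z) = (p < z)"
        proof
          assume "\<theta> < z" thus "p < z" using pQ unfolding Q_def by auto
        next
          assume "p < z"
          show "\<theta> < z"
          proof (rule ccontr)
            assume "\<not> \<theta> < z"
            hence "z \<in> Q" using z unfolding Q_def by auto
            hence "z \<le> p" using finQ unfolding p_def by simp
            thus False using \<open>p < z\<close> by simp
          qed
        qed
      qed
      have e1: "(\<Sum>i=1..n. elem_qscore \<alpha> \<theta> (x1 i) (y i)) = (\<Sum>i=1..n. elem_qscore \<alpha> p (x1 i) (y i))"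
        by (rule sum.cong) (auto simp: elem_qscore_def iff mem)
      have e2: "(\<Sum>i=1..n. elem_qscore \<alpha> \<theta> (x2 i) (y i)) = (\<Sum>i=1..n. elem_qscore \<alpha> p (x2 i) (y i))"
        by (rule sum.cong) (auto simp: elem_qscore_def iff mem)
      have "p \<in> P" using pQ unfolding Q_def by simp
      thus ?thesis using hyp e1 e2 by simp
    qed
  qed
  have npos: "real n > 0" using assms(3) by simp
  have part2: "\<forall>S \<in> quantile_score_class \<alpha>.
             (\<Sum>i=1..n. S (x1 i) (y i)) \<le> (\<Sum>i=1..n. S (x2 i) (y i))"
  proof
    fix S assume "S \<in> quantile_score_class \<alpha>"
    then obtain g where g: "mono g" and S: "S = gpl_qscore \<alpha> g"
      unfolding quantile_score_class_def by blast
    define zs where "zs = sorted_list_of_set P"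
    have s: "sorted_wrt (<) zs" unfolding zs_def by simp
    have setz: "set zs = P" unfolding zs_def using finP by simp
    define m where "m = length zs - 1"
    define D where "D k = g (zs!Suc k) - g (zs!k)" for k
    have Dnn: "\<And>k. k < m \<Longrightarrow> D k \<ge> 0"
    proof -
      fix k assume "k < m"
      hence "zs!k < zs!Suc k" using sorted_wrt_nth_less[OF s] unfolding m_def by simp
      thus "D k \<ge> 0" unfolding D_def using g by (simp add: mono_def)
    qed
    have gx: "\<And>x. x \<in> P \<Longrightarrow> g x - g (zs!0) = (\<Sum>k<m. D k * (if zs!k < x then 1 else 0))"
    proof -
      fix x assume "x \<in> P"
      then obtain j where j: "j < length zs" "x = zs!j" using setz by (metis in_set_conv_nth)
      show "g x - g (zs!0) = (\<Sum>k<m. D k * (if zs!k < x then 1 else 0))"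
        using telescope_sorted[OF s j(1), of g] j(2) unfolding D_def m_def by simp
    qed
    have Sx: "\<And>x w. x \<in> P \<Longrightarrow> w \<in> P \<Longrightarrow> S x w = (\<Sum>k<m. D k * elem_qscore \<alpha> (zs!k) x w)"
    proof -
      fix x w assume x: "x \<in> P" and w: "w \<in> P"
      have "g x - g w = (g x - g (zs!0)) - (g w - g (zs!0))" by simp
      also have "\<dots> = (\<Sum>k<m. D k * ((if zs!k < x then 1 else 0) - (if zs!k < w then 1 else 0)))"
        using gx[OF x] gx[OF w] by (simp add: sum_subtractf right_diff_distrib)
      finally have "g x - g w = \<dots>" .
      thus "S x w = (\<Sum>k<m. D k * elem_qscore \<alpha> (zs!k) x w)"
        unfolding S gpl_qscore_def elem_qscore_def
        by (simp add: sum_distrib_left algebra_simps)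
    qed
    have "(\<Sum>i=1..n. S (x1 i) (y i)) = (\<Sum>i=1..n. \<Sum>k<m. D k * elem_qscore \<alpha> (zs!k) (x1 i) (y i))"
      by (rule sum.cong) (auto simp: Sx mem)
    also have "\<dots> = (\<Sum>k<m. D k * (\<Sum>i=1..n. elem_qscore \<alpha> (zs!k) (x1 i) (y i)))"
      by (subst sum.swap) (simp add: sum_distrib_left)
    also have "\<dots> \<le> (\<Sum>k<m. D k * (\<Sum>i=1..n. elem_qscore \<alpha> (zs!k) (x2 i) (y i)))"
    proof (rule sum_mono)
      fix k assume "k \<in> {..<m}"
      hence k: "k < m" by simp
      have "zs!k \<in> P" using setz k unfolding m_def by auto
      thus "D k * (\<Sum>i=1..n. elem_qscore \<alpha> (zs!k) (x1 i) (y i))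
          \<le> D k * (\<Sum>i=1..n. elem_qscore \<alpha> (zs!k) (x2 i) (y i))"
        using hyp Dnn[OF k] by (simp add: mult_left_mono)
    qed
    also have "\<dots> = (\<Sum>i=1..n. \<Sum>k<m. D k * elem_qscore \<alpha> (zs!k) (x2 i) (y i))"
      by (subst sum.swap) (simp add: sum_distrib_left)
    also have "\<dots> = (\<Sum>i=1..n. S (x2 i) (y i))"
      by (rule sum.cong) (auto simp: Sx mem)
    finally show "(\<Sum>i=1..n. S (x1 i) (y i)) \<le> (\<Sum>i=1..n. S (x2 i) (y i))" .
  qed
  show ?thesis using part1 part2 npos by (simp add: divide_right_mono)
qed

end
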